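(* Let $G$ be a locally compact second countable group with two essentially chief series $(A_i)_{i=0}^m$ and $(B_j)_{j=0}^n$. Let $I=\{i\in\{1,\dots,m\}\mid A_i/A_{i-1}$ is a non-negligible chief factor of $G\}$ and $J=\{j\in\{1,\dots,n\}\mid B_j/B_{j-1}$ is a non-negligible chief factor of $G\}$. Then there is a bijection $f:I\to J$, where $f(i)$ is the unique element $j\in J$ such that $A_i/A_{i-1}$ is associated to $B_j/B_{j-1}$.
   Context: A normal factor of $G$ is $K/L$ with $L<K$ closed normal subgroups of $G$; it is a chief factor if no closed normal subgroup of $G$ lies strictly between $L$ and $K$. An essentially chief series for $G$ is a finite series $\{1\}=G_0\le\dots\le G_n=G$ of closed normal subgroups with each $G_{i+1}/G_i$ compact, discrete, or a chief factor of $G$. Normal factors $K_1/L_1$ and $K_2/L_2$ are associated if $\overline{K_1L_2}=\overline{K_2L_1}$ and $K_i\cap\overline{L_1L_2}=L_i$ for $i=1,2$. A chief factor $K/L$ is negligible if it is abelian or associated to a compact or discrete chief factor of $G$. *)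

theory Defs
  imports "HOL-Analysis.Analysis" "HOL-Algebra.Algebra"
begin

definition topological_group :: "('a, 'b) monoid_scheme \<Rightarrow> 'a topology \<Rightarrow> bool" where
  "topological_group G T \<longleftrightarrow>
     group G \<and> topspace T = carrier G \<and>
     continuous_map (prod_topology T T) T (\<lambda>(x, y). x \<otimes>\<^bsub>G\<^esub> y) \<and>
     continuous_map T T (\<lambda>x. inv\<^bsub>G\<^esub> x)"

definition lcsc_group :: "('a, 'b) monoid_scheme \<Rightarrow> 'a topology \<Rightarrow> bool" where
  "lcsc_group G T \<longleftrightarrow>
     topological_group G T \<and> Hausdorff_space T \<and> locally_compact_space T \<and> second_countable T"

definition closed_normal :: "('a, 'b) monoid_scheme \<Rightarrow> 'a topology \<Rightarrow> 'a set \<Rightarrow> bool" where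
  "closed_normal G T N \<longleftrightarrow> N \<lhd> G \<and> closedin T N"

(* quotient topology on the coset space K/L (cosets L k, k \<in> K), K carrying the subspace topology *)
definition quotient_top :: "('a, 'b) monoid_scheme \<Rightarrow> 'a topology \<Rightarrow> 'a set \<Rightarrow> 'a set \<Rightarrow> 'a set topology" where
  "quotient_top G T K L = topology (\<lambda>U. U \<subseteq> (\<lambda>k. L #>\<^bsub>G\<^esub> k) ` K \<and>
       openin (subtopology T K) {k \<in> K. L #>\<^bsub>G\<^esub> k \<in> U})"

definition compact_factor :: "('a, 'b) monoid_scheme \<Rightarrow> 'a topology \<Rightarrow> 'a set \<Rightarrow> 'a set \<Rightarrow> bool" where
  "compact_factor G T K L \<longleftrightarrow> compact_space (quotient_top G T K L)"

definition discrete_factor :: "('a, 'b) monoid_scheme \<Rightarrow> 'a topology \<Rightarrow> 'a set \<Rightarrow> 'a set \<Rightarrow> bool" where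
  "discrete_factor G T K L \<longleftrightarrow>
     (\<forall>x \<in> topspace (quotient_top G T K L). openin (quotient_top G T K L) {x})"

definition abelian_factor :: "('a, 'b) monoid_scheme \<Rightarrow> 'a set \<Rightarrow> 'a set \<Rightarrow> bool" where
  "abelian_factor G K L \<longleftrightarrow>
     (\<forall>a \<in> K. \<forall>b \<in> K. a \<otimes>\<^bsub>G\<^esub> b \<otimes>\<^bsub>G\<^esub> inv\<^bsub>G\<^esub> a \<otimes>\<^bsub>G\<^esub> inv\<^bsub>G\<^esub> b \<in> L)"

definition normal_factor :: "('a, 'b) monoid_scheme \<Rightarrow> 'a topology \<Rightarrow> 'a set \<Rightarrow> 'a set \<Rightarrow> bool" where
  "normal_factor G T K L \<longleftrightarrow> closed_normal G T K \<and> closed_normal G T L \<and> L \<subset> K"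

definition chief_factor :: "('a, 'b) monoid_scheme \<Rightarrow> 'a topology \<Rightarrow> 'a set \<Rightarrow> 'a set \<Rightarrow> bool" where
  "chief_factor G T K L \<longleftrightarrow> normal_factor G T K L \<and>
     \<not> (\<exists>M. closed_normal G T M \<and> L \<subset> M \<and> M \<subset> K)"

definition associated :: "('a, 'b) monoid_scheme \<Rightarrow> 'a topology \<Rightarrow> 'a set \<Rightarrow> 'a set \<Rightarrow> 'a set \<Rightarrow> 'a set \<Rightarrow> bool" where
  "associated G T K1 L1 K2 L2 \<longleftrightarrow>
     T closure_of (K1 <#>\<^bsub>G\<^esub> L2) = T closure_of (K2 <#>\<^bsub>G\<^esub> L1) \<and>
     K1 \<inter> T closure_of (L1 <#>\<^bsub>G\<^esub> L2) = L1 \<and>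
     K2 \<inter> T closure_of (L1 <#>\<^bsub>G\<^esub> L2) = L2"

definition negligible :: "('a, 'b) monoid_scheme \<Rightarrow> 'a topology \<Rightarrow> 'a set \<Rightarrow> 'a set \<Rightarrow> bool" where
  "negligible G T K L \<longleftrightarrow> chief_factor G T K L \<and>
     (abelian_factor G K L \<or>
      (\<exists>K' L'. chief_factor G T K' L' \<and>
               (compact_factor G T K' L' \<or> discrete_factor G T K' L') \<and>
               associated G T K L K' L'))"

definition ess_chief_series :: "('a, 'b) monoid_scheme \<Rightarrow> 'a topology \<Rightarrow> (nat \<Rightarrow> 'a set) \<Rightarrow> nat \<Rightarrow> bool" where
  "ess_chief_series G T A m \<longleftrightarrow>
     A 0 = {\<one>\<^bsub>G\<^esub>} \<and> A m = carrier G \<and>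
     (\<forall>i \<le> m. closed_normal G T (A i)) \<and>
     (\<forall>i < m. A i \<subseteq> A (Suc i) \<and>
        (compact_factor G T (A (Suc i)) (A i) \<or> discrete_factor G T (A (Suc i)) (A i) \<or>
         chief_factor G T (A (Suc i)) (A i)))"

end

theory Submission imports Defs begin

locale tgrp = group G for G :: "('a,'b) monoid_scheme" (structure) +
  fixes T :: "'a topology"
  assumes top_eq: "topspace T = carrier G"
    and mult_cont: "continuous_map (prod_topology T T) T (\<lambda>(x, y). x \<otimes> y)"
    and inv_cont: "continuous_map T T (\<lambda>x. inv x)"

lemma tgrpI: "topological_group G T \<Longrightarrow> tgrp G T"
  unfolding topological_group_def tgrp_def tgrp_axioms_def by auto

context tgrp begin

lemma cm_mult:
  assumes "continuous_map Z T f" "continuous_map Z T g"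
  shows "continuous_map Z T (\<lambda>z. f z \<otimes> g z)"
proof -
  have "continuous_map Z T ((\<lambda>(x, y). x \<otimes> y) \<circ> (\<lambda>z. (f z, g z)))"
    by (rule continuous_map_compose[OF continuous_map_pairedI[OF assms] mult_cont])
  thus ?thesis by (simp add: o_def)
qed

lemma cm_inv:
  assumes "continuous_map Z T f"
  shows "continuous_map Z T (\<lambda>z. inv (f z))"
proof -
  have "continuous_map Z T ((\<lambda>x. inv x) \<circ> f)"
    by (rule continuous_map_compose[OF assms inv_cont])
  thus ?thesis by (simp add: o_def)
qed

lemma cm_const: "c \<in> carrier G \<Longrightarrow> continuous_map Z T (\<lambda>z. c)"
  using top_eq by simp

lemma cm_id: "continuous_map T T (\<lambda>z. z)"
  using continuous_map_id by (simp add: id_def)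

definition comm where "comm x y = x \<otimes> y \<otimes> inv x \<otimes> inv y"

lemma cm_comm:
  assumes "continuous_map Z T f" "continuous_map Z T g"
  shows "continuous_map Z T (\<lambda>z. comm (f z) (g z))"
  unfolding comm_def by (intro cm_mult cm_inv assms)

lemma cl1:
  assumes "continuous_map T T f" "\<And>x. x \<in> S \<Longrightarrow> f x \<in> R" "closedin T R" "x \<in> T closure_of S"
  shows "f x \<in> R"
proof -
  have "f ` (T closure_of S) \<subseteq> T closure_of (f ` S)"
    by (rule continuous_map_image_closure_subset[OF assms(1)])
  also have "\<dots> \<subseteq> T closure_of R" by (rule closure_of_mono) (use assms(2) in auto)
  also have "\<dots> = R" by (rule closure_of_closedin[OF assms(3)])
  finally show ?thesis using assms(4) by auto
qed

lemma cl2: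
  assumes "continuous_map (prod_topology T T) T (\<lambda>z. h (fst z) (snd z))"
    "\<And>x y. x \<in> S1 \<Longrightarrow> y \<in> S2 \<Longrightarrow> h x y \<in> R" "closedin T R"
    "x \<in> T closure_of S1" "y \<in> T closure_of S2"
  shows "h x y \<in> R"
proof -
  have "(x,y) \<in> prod_topology T T closure_of (S1 \<times> S2)" using assms(4,5) by (simp add: closure_of_Times)
  hence "(\<lambda>z. h (fst z) (snd z)) (x,y) \<in> T closure_of ((\<lambda>z. h (fst z) (snd z)) ` (S1 \<times> S2))"
    using continuous_map_image_closure_subset[OF assms(1)] by blast
  also have "\<dots> \<subseteq> T closure_of R" by (rule closure_of_mono) (use assms(2) in auto)
  also have "\<dots> = R" by (rule closure_of_closedin[OF assms(3)])
  finally show ?thesis by simp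
qed

lemma sub_cl: "S \<subseteq> carrier G \<Longrightarrow> S \<subseteq> T closure_of S"
  using closure_of_subset[of S T] top_eq by simp

lemma cl_carrier: "T closure_of S \<subseteq> carrier G"
  using closure_of_subset_topspace[of T S] top_eq by simp

lemma closure_subgroup:
  assumes "subgroup H G" shows "subgroup (T closure_of H) G"
proof (rule subgroupI)
  have Hc: "H \<subseteq> carrier G" using assms subgroup.subset by blast
  show "T closure_of H \<subseteq> carrier G" by (rule cl_carrier)
  show "T closure_of H \<noteq> {}" using sub_cl[OF Hc] subgroup.one_closed[OF assms] by blast
  fix a assume a: "a \<in> T closure_of H"
  show "inv a \<in> T closure_of H"
  proof (rule cl1[of "\<lambda>x. inv x" H, OF inv_cont _ closedin_closure_of a])
    fix x assume "x \<in> H"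
    hence "inv x \<in> H" by (rule subgroup.m_inv_closed[OF assms])
    thus "inv x \<in> T closure_of H" using sub_cl[OF Hc] by blast
  qed
  fix b assume b: "b \<in> T closure_of H"
  have cm: "continuous_map (prod_topology T T) T (\<lambda>z. fst z \<otimes> snd z)"
    using cm_mult[OF continuous_map_fst continuous_map_snd] by simp
  show "a \<otimes> b \<in> T closure_of H"
  proof (rule cl2[of "\<lambda>x y. x \<otimes> y", OF cm _ closedin_closure_of a b])
    fix x y assume "x \<in> H" "y \<in> H"
    hence "x \<otimes> y \<in> H" by (rule subgroup.m_closed[OF assms])
    thus "x \<otimes> y \<in> T closure_of H" using sub_cl[OF Hc] by blast
  qed
qed

lemma closure_normal:
  assumes "N \<lhd> G" shows "(T closure_of N) \<lhd> G"
proof -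
  have sN: "subgroup N G" by (rule normal_imp_subgroup[OF assms])
  have Nc: "N \<subseteq> carrier G" by (rule subgroup.subset[OF sN])
  show ?thesis unfolding normal_inv_iff
  proof (intro conjI ballI)
    show "subgroup (T closure_of N) G" by (rule closure_subgroup[OF sN])
    fix x h assume x: "x \<in> carrier G" and h: "h \<in> T closure_of N"
    have cm: "continuous_map T T (\<lambda>z. x \<otimes> z \<otimes> inv x)"
      by (rule cm_mult[OF cm_mult[OF cm_const[OF x] cm_id] cm_const]) (simp add: x)
    show "x \<otimes> h \<otimes> inv x \<in> T closure_of N"
    proof (rule cl1[OF cm _ closedin_closure_of h])
      fix y assume "y \<in> N"
      hence "x \<otimes> y \<otimes> inv x \<in> N" by (rule normal.inv_op_closed2[OF assms x])
      thus "x \<otimes> y \<otimes> inv x \<in> T closure_of N" using sub_cl[OF Nc] by blast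
    qed
  qed
qed

definition join where "join N M = T closure_of (N <#> M)"

lemma join_cn:
  assumes "N \<lhd> G" "M \<lhd> G" shows "closed_normal G T (join N M)"
  unfolding closed_normal_def join_def
  using closure_normal[OF normal_subgroup_set_mult_closed[OF assms]] by simp

lemma set_mult_sub: "N <#> M \<subseteq> carrier G" if "N \<subseteq> carrier G" "M \<subseteq> carrier G"
  by (rule setmult_subset_G[OF that])

lemma join_ge1:
  assumes "N \<subseteq> carrier G" "subgroup M G" shows "N \<subseteq> join N M"
proof -
  have "N \<subseteq> N <#> M"
  proof
    fix n assume "n \<in> N"
    hence "n = n \<otimes> \<one>" using assms(1) by (simp add: subsetD)
    thus "n \<in> N <#> M" using \<open>n \<in> N\<close> subgroup.one_closed[OF assms(2)] unfolding set_mult_def by blast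
  qed
  also have "\<dots> \<subseteq> join N M" unfolding join_def
    by (rule sub_cl, rule set_mult_sub) (use assms subgroup.subset in auto)
  finally show ?thesis .
qed

lemma join_ge2:
  assumes "subgroup N G" "M \<subseteq> carrier G" shows "M \<subseteq> join N M"
proof -
  have "M \<subseteq> N <#> M"
  proof
    fix n assume "n \<in> M"
    hence "n = \<one> \<otimes> n" using assms(2) by (simp add: subsetD)
    thus "n \<in> N <#> M" using \<open>n \<in> M\<close> subgroup.one_closed[OF assms(1)] unfolding set_mult_def by blast
  qed
  also have "\<dots> \<subseteq> join N M" unfolding join_def
    by (rule sub_cl, rule set_mult_sub) (use assms subgroup.subset in auto)
  finally show ?thesis .
qed

lemma join_le:
  assumes "subgroup H G" "closedin T H" "N \<subseteq> H" "M \<subseteq> H" shows "join N M \<subseteq> H"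
  unfolding join_def
proof (rule closure_of_minimal[OF _ assms(2)])
  show "N <#> M \<subseteq> H"
  proof
    fix z assume "z \<in> N <#> M"
    then obtain a b where "a \<in> N" "b \<in> M" "z = a \<otimes> b" unfolding set_mult_def by blast
    thus "z \<in> H" using assms(3,4) subgroup.m_closed[OF assms(1)] by blast
  qed
qed


lemma canc1 [simp]: "x \<in> carrier G \<Longrightarrow> y \<in> carrier G \<Longrightarrow> x \<otimes> (inv x \<otimes> y) = y"
  by (simp add: m_assoc[symmetric])
lemma canc2 [simp]: "x \<in> carrier G \<Longrightarrow> y \<in> carrier G \<Longrightarrow> inv x \<otimes> (x \<otimes> y) = y"
  by (simp add: m_assoc[symmetric])

lemma comm_closed [simp]: "x \<in> carrier G \<Longrightarrow> y \<in> carrier G \<Longrightarrow> comm x y \<in> carrier G"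
  by (simp add: comm_def)

lemma comm_inv: "x \<in> carrier G \<Longrightarrow> y \<in> carrier G \<Longrightarrow> comm y x = inv (comm x y)"
  by (simp add: comm_def m_assoc inv_mult_group)

lemma I1: "g \<in> carrier G \<Longrightarrow> h \<in> carrier G \<Longrightarrow> k \<in> carrier G \<Longrightarrow>
  comm (g \<otimes> h) k = g \<otimes> comm h k \<otimes> inv g \<otimes> comm g k"
  by (simp add: comm_def m_assoc inv_mult_group)

lemma I2: "g \<in> carrier G \<Longrightarrow> k \<in> carrier G \<Longrightarrow>
  comm (inv g) k = inv g \<otimes> inv (comm g k) \<otimes> g"
  by (simp add: comm_def m_assoc inv_mult_group)

lemma I3: "x \<in> carrier G \<Longrightarrow> g \<in> carrier G \<Longrightarrow> k \<in> carrier G \<Longrightarrow>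
  comm (x \<otimes> g \<otimes> inv x) k = x \<otimes> comm g (inv x \<otimes> k \<otimes> x) \<otimes> inv x"
  by (simp add: comm_def m_assoc inv_mult_group)

lemma comm_mem1:
  assumes "N \<lhd> G" "a \<in> N" "b \<in> carrier G" shows "comm a b \<in> N"
proof -
  have a: "a \<in> carrier G" by (rule subgroup.mem_carrier[OF normal_imp_subgroup[OF assms(1)] assms(2)])
  have "b \<otimes> inv a \<otimes> inv b \<in> N"
    by (rule normal.inv_op_closed2[OF assms(1) assms(3)])
       (rule subgroup.m_inv_closed[OF normal_imp_subgroup[OF assms(1)] assms(2)])
  hence "a \<otimes> (b \<otimes> inv a \<otimes> inv b) \<in> N"
    by (rule subgroup.m_closed[OF normal_imp_subgroup[OF assms(1)] assms(2)])
  moreover have "comm a b = a \<otimes> (b \<otimes> inv a \<otimes> inv b)" using a assms(3) by (simp add: comm_def m_assoc)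
  ultimately show ?thesis by simp
qed

lemma comm_mem2:
  assumes "N \<lhd> G" "b \<in> N" "a \<in> carrier G" shows "comm a b \<in> N"
proof -
  have b: "b \<in> carrier G" by (rule subgroup.mem_carrier[OF normal_imp_subgroup[OF assms(1)] assms(2)])
  have "a \<otimes> b \<otimes> inv a \<in> N" by (rule normal.inv_op_closed2[OF assms(1) assms(3) assms(2)])
  hence "a \<otimes> b \<otimes> inv a \<otimes> inv b \<in> N"
    by (rule subgroup.m_closed[OF normal_imp_subgroup[OF assms(1)]])
       (rule subgroup.m_inv_closed[OF normal_imp_subgroup[OF assms(1)] assms(2)])
  thus ?thesis by (simp add: comm_def)
qed

definition cent where "cent P M = {g \<in> carrier G. \<forall>x\<in>P. comm g x \<in> M}"

lemma cn_sub: "closed_normal G T N \<Longrightarrow> subgroup N G"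
  unfolding closed_normal_def by (rule normal_imp_subgroup) simp
lemma cn_carr: "closed_normal G T N \<Longrightarrow> N \<subseteq> carrier G"
  by (rule subgroup.subset[OF cn_sub])
lemma cn_norm: "closed_normal G T N \<Longrightarrow> N \<lhd> G"
  unfolding closed_normal_def by blast
lemma cn_closed: "closed_normal G T N \<Longrightarrow> closedin T N"
  unfolding closed_normal_def by blast

lemma cent_cn:
  assumes P: "P \<lhd> G" and M: "closed_normal G T M"
  shows "closed_normal G T (cent P M)"
proof -
  have Mn: "M \<lhd> G" by (rule cn_norm[OF M])
  have sM: "subgroup M G" by (rule cn_sub[OF M])
  have Pc: "P \<subseteq> carrier G" by (rule subgroup.subset[OF normal_imp_subgroup[OF P]])
  have sub: "subgroup (cent P M) G"
  proof (rule subgroupI)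
    show "cent P M \<subseteq> carrier G" unfolding cent_def by blast
    have "\<one> \<in> cent P M" unfolding cent_def
    proof (intro CollectI conjI ballI)
      fix x assume "x \<in> P"
      hence "comm \<one> x = \<one>" using Pc by (simp add: comm_def subsetD)
      thus "comm \<one> x \<in> M" using subgroup.one_closed[OF sM] by simp
    qed simp
    thus "cent P M \<noteq> {}" by blast
  next
    fix a assume a: "a \<in> cent P M"
    hence ac: "a \<in> carrier G" unfolding cent_def by blast
    show "inv a \<in> cent P M" unfolding cent_def
    proof (intro CollectI conjI ballI)
      show "inv a \<in> carrier G" using ac by simp
      fix x assume x: "x \<in> P"
      hence xc: "x \<in> carrier G" using Pc by blast
      have "comm a x \<in> M" using a x unfolding cent_def by blast
      hence "inv (comm a x) \<in> M" by (rule subgroup.m_inv_closed[OF sM])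
      hence "inv a \<otimes> inv (comm a x) \<otimes> inv (inv a) \<in> M"
        by (rule normal.inv_op_closed2[OF Mn inv_closed[OF ac]])
      thus "comm (inv a) x \<in> M" using I2[OF ac xc] ac by simp
    qed
  next
    fix a b assume a: "a \<in> cent P M" and b: "b \<in> cent P M"
    hence ac: "a \<in> carrier G" and bc: "b \<in> carrier G" unfolding cent_def by blast+
    show "a \<otimes> b \<in> cent P M" unfolding cent_def
    proof (intro CollectI conjI ballI)
      show "a \<otimes> b \<in> carrier G" using ac bc by simp
      fix x assume x: "x \<in> P"
      hence xc: "x \<in> carrier G" using Pc by blast
      have 1: "comm a x \<in> M" using a x unfolding cent_def by blast
      have 2: "comm b x \<in> M" using b x unfolding cent_def by blast
      have "a \<otimes> comm b x \<otimes> inv a \<in> M" by (rule normal.inv_op_closed2[OF Mn ac 2])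
      hence "a \<otimes> comm b x \<otimes> inv a \<otimes> comm a x \<in> M" by (rule subgroup.m_closed[OF sM _ 1])
      thus "comm (a \<otimes> b) x \<in> M" using I1[OF ac bc xc] by simp
    qed
  qed
  have nrm: "cent P M \<lhd> G" unfolding normal_inv_iff
  proof (intro conjI ballI)
    show "subgroup (cent P M) G" by (rule sub)
    fix y g assume y: "y \<in> carrier G" and g: "g \<in> cent P M"
    hence gc: "g \<in> carrier G" unfolding cent_def by blast
    show "y \<otimes> g \<otimes> inv y \<in> cent P M" unfolding cent_def
    proof (intro CollectI conjI ballI)
      show "y \<otimes> g \<otimes> inv y \<in> carrier G" using y gc by simp
      fix x assume x: "x \<in> P"
      hence xc: "x \<in> carrier G" using Pc by blast
      have "inv y \<otimes> x \<otimes> y \<in> P" by (rule normal.inv_op_closed1[OF P y x])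
      hence "comm g (inv y \<otimes> x \<otimes> y) \<in> M" using g unfolding cent_def by blast
      hence "y \<otimes> comm g (inv y \<otimes> x \<otimes> y) \<otimes> inv y \<in> M" by (rule normal.inv_op_closed2[OF Mn y])
      thus "comm (y \<otimes> g \<otimes> inv y) x \<in> M" using I3[OF y gc xc] by simp
    qed
  qed
  have cl: "closedin T (cent P M)"
    unfolding closure_of_subset_eq[symmetric]
  proof
    show "cent P M \<subseteq> topspace T" using top_eq unfolding cent_def by blast
    show "T closure_of cent P M \<subseteq> cent P M"
    proof
      fix z assume z: "z \<in> T closure_of cent P M"
      have zc: "z \<in> carrier G" using z cl_carrier by blast
      show "z \<in> cent P M" unfolding cent_def
      proof (intro CollectI conjI ballI)
        show "z \<in> carrier G" by (rule zc)
        fix x assume x: "x \<in> P"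
        hence xc: "x \<in> carrier G" using Pc by blast
        have cm: "continuous_map T T (\<lambda>g. comm g x)" by (rule cm_comm[OF cm_id cm_const[OF xc]])
        show "comm z x \<in> M"
          by (rule cl1[OF cm _ cn_closed[OF M] z]) (use x in \<open>simp add: cent_def\<close>)
      qed
    qed
  qed
  show ?thesis unfolding closed_normal_def using nrm cl by blast
qed


lemma cn_inter: "closed_normal G T N \<Longrightarrow> closed_normal G T M \<Longrightarrow> closed_normal G T (N \<inter> M)"
  unfolding closed_normal_def using normal_subgroup_intersect closedin_Int by blast

lemma cn_Inter:
  assumes "F \<noteq> {}" "\<And>M. M \<in> F \<Longrightarrow> closed_normal G T M"
  shows "closed_normal G T (\<Inter>F)"
proof -
  have sub: "subgroup (\<Inter>F) G" by (rule subgroups_Inter) (use assms cn_sub in auto)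
  have "(\<Inter>F) \<lhd> G" unfolding normal_inv_iff
  proof (intro conjI ballI)
    show "subgroup (\<Inter>F) G" by (rule sub)
    fix x h assume x: "x \<in> carrier G" and h: "h \<in> \<Inter>F"
    show "x \<otimes> h \<otimes> inv x \<in> \<Inter>F"
    proof
      fix M assume M: "M \<in> F"
      hence "h \<in> M" using h by blast
      thus "x \<otimes> h \<otimes> inv x \<in> M" by (rule normal.inv_op_closed2[OF cn_norm[OF assms(2)[OF M]] x])
    qed
  qed
  moreover have "closedin T (\<Inter>F)" by (rule closedin_Inter) (use assms cn_closed in auto)
  ultimately show ?thesis unfolding closed_normal_def by blast
qed

lemma chief_props:
  assumes "chief_factor G T K L"
  shows "closed_normal G T K" "closed_normal G T L" "L \<subseteq> K" "L \<noteq> K"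
  using assms unfolding chief_factor_def normal_factor_def by auto

lemma chief_dich:
  assumes "chief_factor G T K L" "closed_normal G T N" "L \<subseteq> N" "N \<subseteq> K"
  shows "N = L \<or> N = K"
  using assms unfolding chief_factor_def psubset_eq by blast

lemma chief_dich2:
  assumes "chief_factor G T K L" "closed_normal G T N" "L \<subseteq> N"
  shows "K \<inter> N = L \<or> K \<subseteq> N"
proof -
  have "K \<inter> N = L \<or> K \<inter> N = K"
    by (rule chief_dich[OF assms(1) cn_inter[OF chief_props(1)[OF assms(1)] assms(2)]])
       (use assms chief_props(3)[OF assms(1)] in auto)
  thus ?thesis by blast
qed

lemma L_sub_cent:
  assumes "chief_factor G T K L" shows "L \<subseteq> cent K L"
proof
  fix l assume l: "l \<in> L"
  have Kc: "K \<subseteq> carrier G" by (rule cn_carr[OF chief_props(1)[OF assms]])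
  have Lc: "L \<subseteq> carrier G" by (rule cn_carr[OF chief_props(2)[OF assms]])
  show "l \<in> cent K L" unfolding cent_def
  proof (intro CollectI conjI ballI)
    show "l \<in> carrier G" using l Lc by blast
    fix k assume "k \<in> K"
    thus "comm l k \<in> L" using comm_mem1[OF cn_norm[OF chief_props(2)[OF assms]] l] Kc by blast
  qed
qed

lemma abel_iff:
  assumes "K \<subseteq> carrier G" shows "abelian_factor G K L \<longleftrightarrow> K \<subseteq> cent K L"
  using assms unfolding abelian_factor_def cent_def comm_def by blast

lemma K_inter_cent:
  assumes "chief_factor G T K L" "\<not> K \<subseteq> cent K L" shows "K \<inter> cent K L = L"
  using chief_dich2[OF assms(1) cent_cn[OF cn_norm[OF chief_props(1)[OF assms(1)]] chief_props(2)[OF assms(1)]]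
      L_sub_cent[OF assms(1)]] assms(2) by blast

lemma comm_PK:
  assumes "P \<lhd> G" "K \<lhd> G" "x \<in> P" "k \<in> K"
  shows "comm x k \<in> P" "comm x k \<in> K"
proof -
  have xc: "x \<in> carrier G" by (rule subgroup.mem_carrier[OF normal_imp_subgroup[OF assms(1)] assms(3)])
  have kc: "k \<in> carrier G" by (rule subgroup.mem_carrier[OF normal_imp_subgroup[OF assms(2)] assms(4)])
  show "comm x k \<in> P" by (rule comm_mem1[OF assms(1,3) kc])
  show "comm x k \<in> K" by (rule comm_mem2[OF assms(2,4) xc])
qed

lemma assoc_join:
  "associated G T K L P Y \<longleftrightarrow> join K Y = join P L \<and> K \<inter> join L Y = L \<and> P \<inter> join L Y = Y"
  unfolding associated_def join_def by blast

lemma assoc_imp: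
  assumes ch: "chief_factor G T K L" and na: "\<not> K \<subseteq> cent K L"
    and P: "closed_normal G T P" and Y: "closed_normal G T Y" and YP: "Y \<subseteq> P"
    and as: "associated G T K L P Y"
  shows "Y \<subseteq> cent K L" "\<not> P \<subseteq> cent K L"
proof -
  have Kn: "K \<lhd> G" by (rule cn_norm[OF chief_props(1)[OF ch]])
  have Kc: "K \<subseteq> carrier G" by (rule cn_carr[OF chief_props(1)[OF ch]])
  have Lc: "L \<subseteq> carrier G" by (rule cn_carr[OF chief_props(2)[OF ch]])
  have Yc: "Y \<subseteq> carrier G" by (rule cn_carr[OF Y])
  have Pc: "P \<subseteq> carrier G" by (rule cn_carr[OF P])
  have j: "join K Y = join P L" "K \<inter> join L Y = L" "P \<inter> join L Y = Y"
    using as unfolding assoc_join by auto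
  have Yj: "Y \<subseteq> join L Y" by (rule join_ge2[OF cn_sub[OF chief_props(2)[OF ch]] Yc])
  show "Y \<subseteq> cent K L"
  proof
    fix y assume y: "y \<in> Y"
    show "y \<in> cent K L" unfolding cent_def
    proof (intro CollectI conjI ballI)
      show "y \<in> carrier G" using y Yc by blast
      fix k assume k: "k \<in> K"
      have "comm y k \<in> Y" "comm y k \<in> K" using comm_PK[OF cn_norm[OF Y] Kn y k] by auto
      thus "comm y k \<in> L" using j(2) Yj by blast
    qed
  qed
  show "\<not> P \<subseteq> cent K L"
  proof
    assume PC: "P \<subseteq> cent K L"
    have Ccn: "closed_normal G T (cent K L)" by (rule cent_cn[OF Kn chief_props(2)[OF ch]])
    have "K \<subseteq> join K Y" by (rule join_ge1[OF Kc cn_sub[OF Y]])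
    also have "\<dots> = join P L" by (rule j(1))
    also have "\<dots> \<subseteq> cent K L"
      by (rule join_le[OF cn_sub[OF Ccn] cn_closed[OF Ccn] PC L_sub_cent[OF ch]])
    finally show False using na by blast
  qed
qed

lemma assoc_intro:
  assumes ch: "chief_factor G T K L" and na: "\<not> K \<subseteq> cent K L"
    and ch2: "chief_factor G T P Y" and YC: "Y \<subseteq> cent K L" and PC: "\<not> P \<subseteq> cent K L"
  shows "associated G T K L P Y"
proof -
  note K = chief_props(1)[OF ch] and L = chief_props(2)[OF ch]
  note P = chief_props(1)[OF ch2] and Y = chief_props(2)[OF ch2]
  have Kn: "K \<lhd> G" by (rule cn_norm[OF K])
  have Pn: "P \<lhd> G" by (rule cn_norm[OF P])
  have Kc: "K \<subseteq> carrier G" by (rule cn_carr[OF K])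
  have Lc: "L \<subseteq> carrier G" by (rule cn_carr[OF L])
  have Yc: "Y \<subseteq> carrier G" by (rule cn_carr[OF Y])
  have Pc: "P \<subseteq> carrier G" by (rule cn_carr[OF P])
  have Ccn: "closed_normal G T (cent K L)" by (rule cent_cn[OF Kn L])
  have LC: "L \<subseteq> cent K L" by (rule L_sub_cent[OF ch])
  have KC: "K \<inter> cent K L = L" by (rule K_inter_cent[OF ch na])
  have jLY: "closed_normal G T (join L Y)" by (rule join_cn[OF cn_norm[OF L] cn_norm[OF Y]])
  have jLYC: "join L Y \<subseteq> cent K L" by (rule join_le[OF cn_sub[OF Ccn] cn_closed[OF Ccn] LC YC])
  have L1: "L \<subseteq> join L Y" by (rule join_ge1[OF Lc cn_sub[OF Y]])
  have Y1: "Y \<subseteq> join L Y" by (rule join_ge2[OF cn_sub[OF L] Yc])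
  have e1: "K \<inter> join L Y = L"
    using chief_dich2[OF ch jLY L1] jLYC na by blast
  have e2: "P \<inter> join L Y = Y"
    using chief_dich2[OF ch2 jLY Y1] jLYC PC by blast
  have jPL: "closed_normal G T (join P L)" by (rule join_cn[OF Pn cn_norm[OF L]])
  have jKY: "closed_normal G T (join K Y)" by (rule join_cn[OF Kn cn_norm[OF Y]])
  have KjPL: "K \<subseteq> join P L"
  proof -
    have "L \<subseteq> join P L" by (rule join_ge2[OF cn_sub[OF P] Lc])
    from chief_dich2[OF ch jPL this] show ?thesis
    proof
      assume eq: "K \<inter> join P L = L"
      have Pj: "P \<subseteq> join P L" by (rule join_ge1[OF Pc cn_sub[OF L]])
      have "P \<subseteq> cent K L"
      proof
        fix x assume x: "x \<in> P"
        show "x \<in> cent K L" unfolding cent_def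
        proof (intro CollectI conjI ballI)
          show "x \<in> carrier G" using x Pc by blast
          fix k assume k: "k \<in> K"
          have "comm x k \<in> P" "comm x k \<in> K" using comm_PK[OF Pn Kn x k] by auto
          thus "comm x k \<in> L" using eq Pj by blast
        qed
      qed
      thus ?thesis using PC by blast
    qed
  qed
  have PjKY: "P \<subseteq> join K Y"
  proof -
    have "Y \<subseteq> join K Y" by (rule join_ge2[OF cn_sub[OF K] Yc])
    from chief_dich2[OF ch2 jKY this] show ?thesis
    proof
      assume eq: "P \<inter> join K Y = Y"
      have Kj: "K \<subseteq> join K Y" by (rule join_ge1[OF Kc cn_sub[OF Y]])
      have "P \<subseteq> cent K L"
      proof
        fix x assume x: "x \<in> P"
        show "x \<in> cent K L" unfolding cent_def
        proof (intro CollectI conjI ballI)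
          show "x \<in> carrier G" using x Pc by blast
          fix k assume k: "k \<in> K"
          have "comm x k \<in> P" "comm x k \<in> K" using comm_PK[OF Pn Kn x k] by auto
          hence "comm x k \<in> Y" using eq Kj by blast
          hence "comm x k \<in> cent K L" using YC by blast
          thus "comm x k \<in> L" using KC \<open>comm x k \<in> K\<close> by blast
        qed
      qed
      thus ?thesis using PC by blast
    qed
  qed
  have "join K Y \<subseteq> join P L"
    by (rule join_le[OF cn_sub[OF jPL] cn_closed[OF jPL] KjPL])
       (use join_ge1[OF Pc cn_sub[OF L]] chief_props(3)[OF ch2] in blast)
  moreover have "join P L \<subseteq> join K Y"
    by (rule join_le[OF cn_sub[OF jKY] cn_closed[OF jKY] PjKY])
       (use join_ge1[OF Kc cn_sub[OF Y]] chief_props(3)[OF ch] in blast)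
  ultimately show ?thesis unfolding assoc_join using e1 e2 by blast
qed

lemma assoc_sym:
  assumes "closed_normal G T L" "closed_normal G T Y" "associated G T K L P Y"
  shows "associated G T P Y K L"
proof -
  have "L <#> Y = Y <#> L" by (rule commut_normal[OF cn_sub[OF assms(1)] cn_norm[OF assms(2)]])
  thus ?thesis using assms(3) unfolding associated_def by simp
qed


lemma cent_eq:
  assumes ch: "chief_factor G T K L" and na: "\<not> K \<subseteq> cent K L"
    and ch2: "chief_factor G T P Y" and as: "associated G T K L P Y"
  shows "cent P Y = cent K L" "\<not> P \<subseteq> cent P Y"
proof -
  note K = chief_props(1)[OF ch] and L = chief_props(2)[OF ch]
  note P = chief_props(1)[OF ch2] and Y = chief_props(2)[OF ch2]
  have Kn: "K \<lhd> G" by (rule cn_norm[OF K])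
  have Pn: "P \<lhd> G" by (rule cn_norm[OF P])
  have Kc: "K \<subseteq> carrier G" by (rule cn_carr[OF K])
  have Pc: "P \<subseteq> carrier G" by (rule cn_carr[OF P])
  have Ccn: "closed_normal G T (cent K L)" by (rule cent_cn[OF Kn L])
  have Ecn: "closed_normal G T (cent P Y)" by (rule cent_cn[OF Pn Y])
  have YC: "Y \<subseteq> cent K L" and PC: "\<not> P \<subseteq> cent K L"
    using assoc_imp[OF ch na P Y chief_props(3)[OF ch2] as] by auto
  have LC: "L \<subseteq> cent K L" by (rule L_sub_cent[OF ch])
  have KC: "K \<inter> cent K L = L" by (rule K_inter_cent[OF ch na])
  have PCY: "P \<inter> cent K L = Y"
    using chief_dich2[OF ch2 Ccn YC] PC by blast
  have CE: "cent K L \<subseteq> cent P Y"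
  proof
    fix c assume c: "c \<in> cent K L"
    show "c \<in> cent P Y" unfolding cent_def
    proof (intro CollectI conjI ballI)
      show cc: "c \<in> carrier G" using c unfolding cent_def by blast
      fix x assume x: "x \<in> P"
      have "comm c x \<in> P" by (rule comm_mem2[OF Pn x cc])
      moreover have "comm c x \<in> cent K L"
        by (rule comm_mem1[OF cn_norm[OF Ccn] c]) (use x Pc in blast)
      ultimately show "comm c x \<in> Y" using PCY by blast
    qed
  qed
  have LE: "L \<subseteq> cent P Y" using LC CE by blast
  have KE: "K \<inter> cent P Y = L"
  proof -
    from chief_dich2[OF ch Ecn LE] show ?thesis
    proof
      assume KE: "K \<subseteq> cent P Y"
      have "P \<subseteq> cent K L"
      proof
        fix x assume x: "x \<in> P"
        have xc: "x \<in> carrier G" using x Pc by blast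
        show "x \<in> cent K L" unfolding cent_def
        proof (intro CollectI conjI ballI)
          show "x \<in> carrier G" by (rule xc)
          fix k assume k: "k \<in> K"
          have kc: "k \<in> carrier G" using k Kc by blast
          have "comm k x \<in> Y" using KE k x unfolding cent_def by blast
          moreover have "comm k x \<in> K" by (rule comm_mem1[OF Kn k xc])
          ultimately have "comm k x \<in> L" using YC KC by blast
          hence "inv (comm k x) \<in> L" by (rule subgroup.m_inv_closed[OF cn_sub[OF L]])
          thus "comm x k \<in> L" using comm_inv[OF kc xc] by simp
        qed
      qed
      thus ?thesis using PC by blast
    qed
  qed
  have EC: "cent P Y \<subseteq> cent K L"
  proof
    fix e assume e: "e \<in> cent P Y"
    have ec: "e \<in> carrier G" using e unfolding cent_def by blast
    show "e \<in> cent K L" unfolding cent_def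
    proof (intro CollectI conjI ballI)
      show "e \<in> carrier G" by (rule ec)
      fix k assume k: "k \<in> K"
      have "comm e k \<in> K" by (rule comm_mem2[OF Kn k ec])
      moreover have "comm e k \<in> cent P Y" by (rule comm_mem1[OF cn_norm[OF Ecn] e]) (use k Kc in blast)
      ultimately show "comm e k \<in> L" using KE by blast
    qed
  qed
  show "cent P Y = cent K L" using CE EC by blast
  thus "\<not> P \<subseteq> cent P Y" using PC by simp
qed

lemma KEY:
  assumes ch: "chief_factor G T K L" and Pn: "P \<lhd> G" and M: "closed_normal G T M"
    and PLM: "P \<inter> L \<subseteq> M" and MC: "\<not> M \<subseteq> cent K L"
    and x: "x \<in> P" and k: "k \<in> K"
  shows "comm x k \<in> M"
proof -
  note K = chief_props(1)[OF ch] and L = chief_props(2)[OF ch]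
  have Kn: "K \<lhd> G" by (rule cn_norm[OF K])
  have Ln: "L \<lhd> G" by (rule cn_norm[OF L])
  have Mn: "M \<lhd> G" by (rule cn_norm[OF M])
  have Kc: "K \<subseteq> carrier G" by (rule cn_carr[OF K])
  have Pc: "P \<subseteq> carrier G" by (rule subgroup.subset[OF normal_imp_subgroup[OF Pn]])
  have Dcn: "closed_normal G T (cent P M)" by (rule cent_cn[OF Pn M])
  have LD: "L \<subseteq> cent P M"
  proof
    fix l assume l: "l \<in> L"
    have lc: "l \<in> carrier G" using l cn_carr[OF L] by blast
    show "l \<in> cent P M" unfolding cent_def
    proof (intro CollectI conjI ballI)
      show "l \<in> carrier G" by (rule lc)
      fix y assume y: "y \<in> P"
      have "comm l y \<in> L" by (rule comm_mem1[OF Ln l]) (use y Pc in blast)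
      moreover have "comm l y \<in> P" by (rule comm_mem2[OF Pn y lc])
      ultimately show "comm l y \<in> M" using PLM by blast
    qed
  qed
  from chief_dich2[OF ch Dcn LD] show ?thesis
  proof
    assume KD: "K \<subseteq> cent P M"
    have xc: "x \<in> carrier G" using x Pc by blast
    have kc: "k \<in> carrier G" using k Kc by blast
    have "comm k x \<in> M" using KD k x unfolding cent_def by blast
    hence "inv (comm k x) \<in> M" by (rule subgroup.m_inv_closed[OF cn_sub[OF M]])
    thus ?thesis using comm_inv[OF kc xc] by simp
  next
    assume DL: "K \<inter> cent P M = L"
    have MKL: "M \<inter> K \<subseteq> L"
    proof
      fix z assume z: "z \<in> M \<inter> K"
      have zc: "z \<in> carrier G" using z Kc by blast
      have "z \<in> cent P M" unfolding cent_def
      proof (intro CollectI conjI ballI)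
        show "z \<in> carrier G" by (rule zc)
        fix y assume "y \<in> P"
        thus "comm z y \<in> M" using comm_mem1[OF Mn] z Pc by blast
      qed
      thus "z \<in> L" using DL z by blast
    qed
    have "M \<subseteq> cent K L"
    proof
      fix m assume m: "m \<in> M"
      have mc: "m \<in> carrier G" using m cn_carr[OF M] by blast
      show "m \<in> cent K L" unfolding cent_def
      proof (intro CollectI conjI ballI)
        show "m \<in> carrier G" by (rule mc)
        fix k' assume k': "k' \<in> K"
        have "comm m k' \<in> M" "comm m k' \<in> K" using comm_PK[OF Mn Kn m k'] by auto
        thus "comm m k' \<in> L" using MKL by blast
      qed
    qed
    thus ?thesis using MC by blast
  qed
qed

lemma construct:
  assumes ch: "chief_factor G T K L" and na: "\<not> K \<subseteq> cent K L"
    and P: "closed_normal G T P" and Y: "closed_normal G T Y" and YP: "Y \<subseteq> P"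
    and YC: "Y \<subseteq> cent K L" and PC: "\<not> P \<subseteq> cent K L"
  shows "\<exists>K' L'. chief_factor G T K' L' \<and> Y \<subseteq> L' \<and> K' \<subseteq> P \<and> associated G T K L K' L'"
proof -
  note K = chief_props(1)[OF ch] and L = chief_props(2)[OF ch]
  have Kn: "K \<lhd> G" by (rule cn_norm[OF K])
  have Pn: "P \<lhd> G" by (rule cn_norm[OF P])
  have Pc: "P \<subseteq> carrier G" by (rule cn_carr[OF P])
  have Kc: "K \<subseteq> carrier G" by (rule cn_carr[OF K])
  have Ccn: "closed_normal G T (cent K L)" by (rule cent_cn[OF Kn L])
  have LC: "L \<subseteq> cent K L" by (rule L_sub_cent[OF ch])
  have KC: "K \<inter> cent K L = L" by (rule K_inter_cent[OF ch na])
  define L' where "L' = P \<inter> cent K L"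
  define F where "F = {M. closed_normal G T M \<and> L' \<subseteq> M \<and> (\<forall>x\<in>P. \<forall>k\<in>K. comm x k \<in> M)}"
  define K' where "K' = \<Inter>F"
  have L'cn: "closed_normal G T L'" unfolding L'_def by (rule cn_inter[OF P Ccn])
  have PF: "P \<in> F" unfolding F_def L'_def using P comm_PK(1)[OF Pn Kn] by blast
  have Fne: "F \<noteq> {}" using PF by blast
  have K'cn: "closed_normal G T K'" unfolding K'_def by (rule cn_Inter[OF Fne]) (simp add: F_def)
  have K'P: "K' \<subseteq> P" unfolding K'_def using PF by blast
  have L'K': "L' \<subseteq> K'" unfolding K'_def F_def by blast
  have commK': "\<And>x k. x \<in> P \<Longrightarrow> k \<in> K \<Longrightarrow> comm x k \<in> K'" unfolding K'_def F_def by blast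
  have K'C: "\<not> K' \<subseteq> cent K L"
  proof
    assume K'C: "K' \<subseteq> cent K L"
    have jcn: "closed_normal G T (join L K')" by (rule join_cn[OF cn_norm[OF L] cn_norm[OF K'cn]])
    have Lj: "L \<subseteq> join L K'" by (rule join_ge1[OF cn_carr[OF L] cn_sub[OF K'cn]])
    have K'j: "K' \<subseteq> join L K'" by (rule join_ge2[OF cn_sub[OF L] cn_carr[OF K'cn]])
    have jC: "join L K' \<subseteq> cent K L" by (rule join_le[OF cn_sub[OF Ccn] cn_closed[OF Ccn] LC K'C])
    from chief_dich2[OF ch jcn Lj] show False
    proof
      assume eq: "K \<inter> join L K' = L"
      have "P \<subseteq> cent K L"
      proof
        fix x assume x: "x \<in> P"
        show "x \<in> cent K L" unfolding cent_def
        proof (intro CollectI conjI ballI)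
          show "x \<in> carrier G" using x Pc by blast
          fix k assume k: "k \<in> K"
          have "comm x k \<in> K" using comm_PK(2)[OF Pn Kn x k] .
          moreover have "comm x k \<in> K'" by (rule commK'[OF x k])
          ultimately show "comm x k \<in> L" using eq K'j by blast
        qed
      qed
      thus False using PC by blast
    next
      assume "K \<subseteq> join L K'"
      thus False using jC na by blast
    qed
  qed
  have L'C: "L' \<subseteq> cent K L" unfolding L'_def by blast
  have chief: "chief_factor G T K' L'"
    unfolding chief_factor_def normal_factor_def
  proof (intro conjI)
    show "closed_normal G T K'" by (rule K'cn)
    show "closed_normal G T L'" by (rule L'cn)
    show "L' \<subset> K'" using L'K' K'C L'C by blast
    show "\<not> (\<exists>M. closed_normal G T M \<and> L' \<subset> M \<and> M \<subset> K')"
    proof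
      assume "\<exists>M. closed_normal G T M \<and> L' \<subset> M \<and> M \<subset> K'"
      then obtain M where M: "closed_normal G T M" "L' \<subset> M" "M \<subset> K'" by blast
      show False
      proof (cases "M \<subseteq> cent K L")
        case True
        hence "M \<subseteq> L'" using M(3) K'P unfolding L'_def by blast
        thus False using M(2) by blast
      next
        case False
        have "P \<inter> L \<subseteq> M" using M(2) LC unfolding L'_def by blast
        hence "\<forall>x\<in>P. \<forall>k\<in>K. comm x k \<in> M" using KEY[OF ch Pn M(1) _ False] by blast
        hence "M \<in> F" unfolding F_def using M by blast
        hence "K' \<subseteq> M" unfolding K'_def by blast
        thus False using M(3) by blast
      qed
    qed
  qed
  have YL': "Y \<subseteq> L'" unfolding L'_def using YP YC by blast
  have "associated G T K L K' L'" by (rule assoc_intro[OF ch na chief L'C K'C])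
  thus ?thesis using chief YL' K'P by blast
qed


lemma qt_istop: "istopology (\<lambda>U. U \<subseteq> (\<lambda>k. Y #> k) ` P \<and> openin (subtopology T P) {k \<in> P. Y #> k \<in> U})"
proof -
  have A: "openin (subtopology T P) {k \<in> P. Y #> k \<in> S \<inter> S'}"
    if "openin (subtopology T P) {k \<in> P. Y #> k \<in> S}" "openin (subtopology T P) {k \<in> P. Y #> k \<in> S'}" for S S'
  proof -
    have "{k \<in> P. Y #> k \<in> S \<inter> S'} = {k \<in> P. Y #> k \<in> S} \<inter> {k \<in> P. Y #> k \<in> S'}" by blast
    thus ?thesis using openin_Int[OF that] by simp
  qed
  have B: "openin (subtopology T P) {k \<in> P. Y #> k \<in> \<Union>KK}"
    if "\<forall>K\<in>KK. openin (subtopology T P) {k \<in> P. Y #> k \<in> K}" for KK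
  proof -
    have "{k \<in> P. Y #> k \<in> \<Union>KK} = \<Union>((\<lambda>K. {k \<in> P. Y #> k \<in> K}) ` KK)" by blast
    moreover have "openin (subtopology T P) (\<Union>((\<lambda>K. {k \<in> P. Y #> k \<in> K}) ` KK))"
      by (rule openin_Union) (use that in blast)
    ultimately show ?thesis by simp
  qed
  have C: "\<forall>S S'. (S \<subseteq> (\<lambda>k. Y #> k) ` P \<and> openin (subtopology T P) {k \<in> P. Y #> k \<in> S}) \<longrightarrow>
     (S' \<subseteq> (\<lambda>k. Y #> k) ` P \<and> openin (subtopology T P) {k \<in> P. Y #> k \<in> S'}) \<longrightarrow>
     (S \<inter> S' \<subseteq> (\<lambda>k. Y #> k) ` P \<and> openin (subtopology T P) {k \<in> P. Y #> k \<in> S \<inter> S'})"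
    using A by blast
  have D: "\<forall>KK. (\<forall>K\<in>KK. K \<subseteq> (\<lambda>k. Y #> k) ` P \<and> openin (subtopology T P) {k \<in> P. Y #> k \<in> K}) \<longrightarrow>
     (\<Union>KK \<subseteq> (\<lambda>k. Y #> k) ` P \<and> openin (subtopology T P) {k \<in> P. Y #> k \<in> \<Union>KK})"
    using B by blast
  show ?thesis unfolding istopology_def using C D by simp
qed

lemma qt_open: "openin (quotient_top G T P Y) U \<longleftrightarrow>
   U \<subseteq> (\<lambda>k. Y #> k) ` P \<and> openin (subtopology T P) {k \<in> P. Y #> k \<in> U}"
  unfolding quotient_top_def using qt_istop by simp

lemma qt_topspace:
  assumes "P \<subseteq> carrier G" shows "topspace (quotient_top G T P Y) = (\<lambda>k. Y #> k) ` P"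
proof
  show "topspace (quotient_top G T P Y) \<subseteq> (\<lambda>k. Y #> k) ` P"
    unfolding topspace_def qt_open by blast
  have "{k \<in> P. Y #> k \<in> (\<lambda>k. Y #> k) ` P} = topspace (subtopology T P)"
    using assms top_eq by auto
  hence "openin (quotient_top G T P Y) ((\<lambda>k. Y #> k) ` P)" unfolding qt_open
    using openin_topspace[of "subtopology T P"] by simp
  thus "(\<lambda>k. Y #> k) ` P \<subseteq> topspace (quotient_top G T P Y)" by (rule openin_subset)
qed

lemma rcos_eq_iff:
  assumes "subgroup H G" "a \<in> carrier G" "b \<in> carrier G"
  shows "H #> a = H #> b \<longleftrightarrow> a \<otimes> inv b \<in> H"
proof
  assume "H #> a = H #> b"
  hence "a \<in> H #> b" using rcos_self[OF assms(2,1)] by simp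
  thus "a \<otimes> inv b \<in> H" by (rule subgroup.rcos_module_imp[OF assms(1) is_group assms(3)])
next
  assume "a \<otimes> inv b \<in> H"
  hence "a \<in> H #> b" by (rule subgroup.rcos_module_rev[OF assms(1) is_group assms(3,2)])
  thus "H #> a = H #> b" using repr_independence[OF _ assms(3,1)] by simp
qed

lemma open_sub_restrict:
  assumes "openin (subtopology T P) S" "K' \<subseteq> P"
  shows "openin (subtopology T K') (S \<inter> K')"
proof -
  obtain Ob where ob: "openin T Ob" "S = Ob \<inter> P" using assms(1) unfolding openin_subtopology by (elim exE conjE) 
  hence "S \<inter> K' = Ob \<inter> K'" using assms(2) by blast
  thus ?thesis unfolding openin_subtopology using ob(1) by (intro exI[of _ Ob]) simp
qed

lemma TD:
  assumes K': "closed_normal G T K'" and L': "closed_normal G T L'" and P: "closed_normal G T P"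
    and Y: "closed_normal G T Y"
    and YL: "Y \<subseteq> L'" and LK: "L' \<subseteq> K'" and KP: "K' \<subseteq> P"
    and d: "discrete_factor G T P Y"
  shows "discrete_factor G T K' L'"
  unfolding discrete_factor_def
proof
  have Pc: "P \<subseteq> carrier G" by (rule cn_carr[OF P])
  have K'c: "K' \<subseteq> carrier G" by (rule cn_carr[OF K'])
  have sL: "subgroup L' G" by (rule cn_sub[OF L'])
  have sY: "subgroup Y G" by (rule cn_sub[OF Y])
  fix c assume "c \<in> topspace (quotient_top G T K' L')"
  then obtain k where k: "k \<in> K'" and c: "c = L' #> k" using qt_topspace[OF K'c] by auto
  have kc: "k \<in> carrier G" using k K'c by blast
  have eq: "{k' \<in> K'. L' #> k' \<in> {c}} =
     \<Union>((\<lambda>l. {k' \<in> P. Y #> k' \<in> {Y #> (l \<otimes> k)}} \<inter> K') ` L')"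
  proof (intro equalityI subsetI)
    fix k' assume "k' \<in> {k' \<in> K'. L' #> k' \<in> {c}}"
    hence k': "k' \<in> K'" "L' #> k' = L' #> k" using c by auto
    have k'c: "k' \<in> carrier G" using k' K'c by blast
    have l: "k' \<otimes> inv k \<in> L'" using k'(2) rcos_eq_iff[OF sL k'c kc] by simp
    have "k' = (k' \<otimes> inv k) \<otimes> k" using k'c kc by (simp add: m_assoc)
    hence "Y #> k' = Y #> ((k' \<otimes> inv k) \<otimes> k)" by (rule arg_cong)
    have "k' \<in> {k' \<in> P. Y #> k' \<in> {Y #> (k' \<otimes> inv k \<otimes> k)}} \<inter> K'"
        using \<open>Y #> k' = Y #> ((k' \<otimes> inv k) \<otimes> k)\<close> k'(1) KP by auto
    thus "k' \<in> \<Union>((\<lambda>l. {k' \<in> P. Y #> k' \<in> {Y #> (l \<otimes> k)}} \<inter> K') ` L')"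
      using l by blast
  next
    fix k' assume "k' \<in> \<Union>((\<lambda>l. {k' \<in> P. Y #> k' \<in> {Y #> (l \<otimes> k)}} \<inter> K') ` L')"
    then obtain l where l: "l \<in> L'" and k': "k' \<in> K'" "Y #> k' = Y #> (l \<otimes> k)" by blast
    have k'c: "k' \<in> carrier G" using k' K'c by blast
    have lc: "l \<in> carrier G" by (rule subgroup.mem_carrier[OF sL l])
    have "k' \<otimes> inv (l \<otimes> k) \<in> Y" using k'(2) rcos_eq_iff[OF sY k'c] lc kc by simp
    hence 1: "k' \<otimes> inv (l \<otimes> k) \<in> L'" using YL by blast
    have "k' \<otimes> inv k = (k' \<otimes> inv (l \<otimes> k)) \<otimes> l" using k'c lc kc by (simp add: m_assoc inv_mult_group)
    also have "\<dots> \<in> L'" by (rule subgroup.m_closed[OF sL 1 l])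
    finally have "L' #> k' = L' #> k" using rcos_eq_iff[OF sL k'c kc] by simp
    thus "k' \<in> {k' \<in> K'. L' #> k' \<in> {c}}" using k' c by simp
  qed
  have "openin (subtopology T K') (\<Union>((\<lambda>l. {k' \<in> P. Y #> k' \<in> {Y #> (l \<otimes> k)}} \<inter> K') ` L'))"
  proof (rule openin_Union, clarify)
    fix l assume l: "l \<in> L'"
    have "l \<otimes> k \<in> K'" by (rule subgroup.m_closed[OF cn_sub[OF K'] _ k]) (use l LK in blast)
    hence lk: "l \<otimes> k \<in> P" using KP by blast
    have "Y #> (l \<otimes> k) \<in> topspace (quotient_top G T P Y)" using qt_topspace[OF Pc] lk by blast
    hence "openin (quotient_top G T P Y) {Y #> (l \<otimes> k)}" using d unfolding discrete_factor_def by blast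
    hence "openin (subtopology T P) {k' \<in> P. Y #> k' \<in> {Y #> (l \<otimes> k)}}" unfolding qt_open by blast
    thus "openin (subtopology T K') ({k' \<in> P. Y #> k' \<in> {Y #> (l \<otimes> k)}} \<inter> K')"
      by (rule open_sub_restrict[OF _ KP])
  qed
  hence "openin (subtopology T K') {k' \<in> K'. L' #> k' \<in> {c}}" using eq by simp
  moreover have "{c} \<subseteq> (\<lambda>k. L' #> k) ` K'" using c k by blast
  ultimately show "openin (quotient_top G T K' L') {c}" unfolding qt_open by blast
qed


lemma set_mult_absorb:
  assumes "subgroup H G" "subgroup Y G" "Y \<subseteq> H" shows "H <#> Y = H"
proof
  show "H <#> Y \<subseteq> H"
  proof
    fix z assume "z \<in> H <#> Y"
    then obtain a b where "a \<in> H" "b \<in> Y" "z = a \<otimes> b" unfolding set_mult_def by blast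
    thus "z \<in> H" using assms(3) subgroup.m_closed[OF assms(1)] by blast
  qed
  show "H \<subseteq> H <#> Y"
  proof
    fix n assume n: "n \<in> H"
    hence "n = n \<otimes> \<one>" using subgroup.mem_carrier[OF assms(1) n] by simp
    thus "n \<in> H <#> Y" using n subgroup.one_closed[OF assms(2)] unfolding set_mult_def by blast
  qed
qed

lemma TC:
  assumes K': "closed_normal G T K'" and L': "closed_normal G T L'" and P: "closed_normal G T P"
    and Y: "closed_normal G T Y"
    and YL: "Y \<subseteq> L'" and LK: "L' \<subseteq> K'" and KP: "K' \<subseteq> P"
    and cp: "compact_factor G T P Y"
  shows "compact_factor G T K' L'"
proof -
  have Pc: "P \<subseteq> carrier G" by (rule cn_carr[OF P])
  have K'c: "K' \<subseteq> carrier G" by (rule cn_carr[OF K'])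
  have sL: "subgroup L' G" by (rule cn_sub[OF L'])
  have sY: "subgroup Y G" by (rule cn_sub[OF Y])
  have sK: "subgroup K' G" by (rule cn_sub[OF K'])
  define Q where "Q = quotient_top G T P Y"
  define Q' where "Q' = quotient_top G T K' L'"
  define S where "S = (\<lambda>k. Y #> k) ` K'"
  define \<phi> where "\<phi> = (\<lambda>c. L' <#> c)"
  have tQ: "topspace Q = (\<lambda>k. Y #> k) ` P" unfolding Q_def by (rule qt_topspace[OF Pc])
  have tQ': "topspace Q' = (\<lambda>k. L' #> k) ` K'" unfolding Q'_def by (rule qt_topspace[OF K'c])
  have SQ: "S \<subseteq> topspace Q" unfolding tQ S_def using KP by blast
  have phi_eq: "\<phi> (Y #> k) = L' #> k" if "k \<in> carrier G" for k
  proof -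
    have "\<phi> (Y #> k) = (L' <#> Y) #> k" unfolding \<phi>_def
      by (rule setmult_rcos_assoc) (use cn_carr[OF L'] cn_carr[OF Y] that in auto)
    also have "L' <#> Y = L'" by (rule set_mult_absorb[OF sL sY YL])
    finally show ?thesis .
  qed
  have memS: "x \<in> K'" if a1: "x \<in> P" and a2: "Y #> x \<in> S" for x
  proof -
    obtain k where k: "k \<in> K'" "Y #> x = Y #> k" using a2 unfolding S_def by blast
    have xc: "x \<in> carrier G" using a1 Pc by blast
    have kc: "k \<in> carrier G" using k K'c by blast
    have "x \<otimes> inv k \<in> Y" using k(2) rcos_eq_iff[OF sY xc kc] by simp
    hence "x \<otimes> inv k \<in> K'" using YL LK by blast
    hence "x \<otimes> inv k \<otimes> k \<in> K'" by (rule subgroup.m_closed[OF sK _ k(1)])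
    thus ?thesis using xc kc by (simp add: m_assoc)
  qed
  have clS: "closedin Q S" unfolding closedin_def
  proof (intro conjI)
    show "S \<subseteq> topspace Q" by (rule SQ)
    have eq: "{x \<in> P. Y #> x \<in> topspace Q - S} = (topspace T - K') \<inter> P"
    proof (intro equalityI subsetI)
      fix x assume "x \<in> {x \<in> P. Y #> x \<in> topspace Q - S}"
      thus "x \<in> (topspace T - K') \<inter> P" using Pc top_eq unfolding S_def by auto
    next
      fix x assume x: "x \<in> (topspace T - K') \<inter> P"
      hence "Y #> x \<notin> S" using memS by blast
      moreover have "Y #> x \<in> topspace Q" unfolding tQ using x by blast
      ultimately show "x \<in> {x \<in> P. Y #> x \<in> topspace Q - S}" using x by blast
    qed
    have "openin T (topspace T - K')" using cn_closed[OF K'] unfolding closedin_def by blast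
    hence "openin (subtopology T P) ((topspace T - K') \<inter> P)" unfolding openin_subtopology by blast
    hence "openin (subtopology T P) {x \<in> P. Y #> x \<in> topspace Q - S}" using eq by simp
    moreover have "topspace Q - S \<subseteq> (\<lambda>k. Y #> k) ` P" using tQ by blast
    ultimately show "openin Q (topspace Q - S)" unfolding Q_def qt_open by blast
  qed
  have cS: "compactin Q S" using cp clS closedin_compact_space unfolding compact_factor_def Q_def by blast
  have cS2: "compactin (subtopology Q S) S" using cS compactin_subtopology by blast
  have tsub: "topspace (subtopology Q S) = S" using SQ by auto
  have cont: "continuous_map (subtopology Q S) Q' \<phi>"
    unfolding continuous_map_def
  proof (intro conjI allI impI)
    show "\<phi> \<in> topspace (subtopology Q S) \<rightarrow> topspace Q'"
    proof
      fix c assume "c \<in> topspace (subtopology Q S)"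
      then obtain k where k: "k \<in> K'" "c = Y #> k" using tsub unfolding S_def by auto
      have "\<phi> c = L' #> k" using phi_eq k K'c by blast
      thus "\<phi> c \<in> topspace Q'" using tQ' k by blast
    qed
    fix U assume U: "openin Q' U"
    have W: "openin (subtopology T K') {k \<in> K'. L' #> k \<in> U}" using U unfolding Q'_def qt_open by blast
    obtain Ob where Ob: "openin T Ob" "{k \<in> K'. L' #> k \<in> U} = Ob \<inter> K'"
      using W unfolding openin_subtopology by (elim exE conjE)
    define O' where "O' = \<Union>((\<lambda>y. {z \<in> topspace T. inv y \<otimes> z \<in> Ob}) ` Y)"
    have O'open: "openin T O'" unfolding O'_def
    proof (rule openin_Union, clarify)
      fix y assume y: "y \<in> Y"
      have yc: "inv y \<in> carrier G" using y cn_carr[OF Y] by blast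
      have "continuous_map T T (\<lambda>z. inv y \<otimes> z)" by (rule cm_mult[OF cm_const[OF yc] cm_id])
      thus "openin T {z \<in> topspace T. inv y \<otimes> z \<in> Ob}" by (rule openin_continuous_map_preimage[OF _ Ob(1)])
    qed
    have O'c: "O' \<subseteq> carrier G" unfolding O'_def using top_eq by blast
    have sat: "y' \<otimes> z \<in> O'" if t1: "z \<in> O'" and t2: "y' \<in> Y" for z y'
    proof -
      obtain y where y: "y \<in> Y" "z \<in> topspace T" "inv y \<otimes> z \<in> Ob" using t1 unfolding O'_def by blast
      have zc: "z \<in> carrier G" using y(2) top_eq by simp
      have yc: "y \<in> carrier G" using y(1) cn_carr[OF Y] by blast
      have y'c: "y' \<in> carrier G" using t2 cn_carr[OF Y] by blast
      have "inv (y' \<otimes> y) \<otimes> (y' \<otimes> z) = inv y \<otimes> z" using zc yc y'c by (simp add: inv_mult_group m_assoc)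
      hence "inv (y' \<otimes> y) \<otimes> (y' \<otimes> z) \<in> Ob" using y(3) by simp
      moreover have "y' \<otimes> y \<in> Y" by (rule subgroup.m_closed[OF sY t2 y(1)])
      moreover have "y' \<otimes> z \<in> topspace T" using zc y'c top_eq by simp
      ultimately show ?thesis unfolding O'_def by blast
    qed
    have ObO': "Ob \<inter> carrier G \<subseteq> O'"
    proof
      fix z assume z: "z \<in> Ob \<inter> carrier G"
      hence "inv \<one> \<otimes> z \<in> Ob" by simp
      thus "z \<in> O'" unfolding O'_def using z top_eq subgroup.one_closed[OF sY] by blast
    qed
    have inY: "\<exists>y\<in>Y. x = y \<otimes> x'" if "x \<in> carrier G" "x' \<in> carrier G" "Y #> x = Y #> x'" for x x'
    proof -
      have "x \<in> Y #> x'" using rcos_self[OF that(1) sY] that(3) by simp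
      thus ?thesis unfolding r_coset_def by blast
    qed
    define V where "V = (\<lambda>x. Y #> x) ` (P \<inter> O')"
    have Vopen: "openin Q V"
    proof -
      have eq: "{x \<in> P. Y #> x \<in> V} = O' \<inter> P"
      proof (intro equalityI subsetI)
        fix x assume "x \<in> {x \<in> P. Y #> x \<in> V}"
        then obtain x' where x: "x \<in> P" "x' \<in> P" "x' \<in> O'" "Y #> x = Y #> x'" unfolding V_def by blast
        obtain y where "y \<in> Y" "x = y \<otimes> x'" using inY[OF _ _ x(4)] x Pc by blast
        thus "x \<in> O' \<inter> P" using sat[OF x(3)] x(1) by simp
      next
        fix x assume "x \<in> O' \<inter> P"
        thus "x \<in> {x \<in> P. Y #> x \<in> V}" unfolding V_def by blast
      qed
      have "openin (subtopology T P) (O' \<inter> P)" unfolding openin_subtopology using O'open by blast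
      hence "openin (subtopology T P) {x \<in> P. Y #> x \<in> V}" using eq by simp
      moreover have "V \<subseteq> (\<lambda>x. Y #> x) ` P" unfolding V_def by blast
      ultimately show ?thesis unfolding Q_def qt_open by blast
    qed
    have eq2: "{c \<in> topspace (subtopology Q S). \<phi> c \<in> U} = V \<inter> S"
    proof (intro equalityI subsetI)
      fix c assume "c \<in> {c \<in> topspace (subtopology Q S). \<phi> c \<in> U}"
      hence c: "c \<in> S" "\<phi> c \<in> U" using tsub by auto
      then obtain k where k: "k \<in> K'" "c = Y #> k" unfolding S_def by blast
      have kc: "k \<in> carrier G" using k(1) K'c by blast
      have "L' #> k \<in> U" using c(2) phi_eq[OF kc] k(2) by simp
      hence "k \<in> Ob" using Ob(2) k(1) by blast
      hence "k \<in> O'" using ObO' kc by blast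
      hence "c \<in> V" unfolding V_def using k KP by blast
      thus "c \<in> V \<inter> S" using c(1) by blast
    next
      fix c assume "c \<in> V \<inter> S"
      then obtain k x where k: "k \<in> K'" "c = Y #> k" and x: "x \<in> P" "x \<in> O'" "c = Y #> x"
        unfolding V_def S_def by blast
      have kc: "k \<in> carrier G" using k(1) K'c by blast
      have xc: "x \<in> carrier G" using x(1) Pc by blast
      obtain y where "y \<in> Y" "k = y \<otimes> x" using inY[OF kc xc] k(2) x(3) by auto
      hence "k \<in> O'" using sat[OF x(2)] by simp
      then obtain y where y: "y \<in> Y" "inv y \<otimes> k \<in> Ob" unfolding O'_def by blast
      have yc: "y \<in> carrier G" using y(1) cn_carr[OF Y] by blast
      have "inv y \<in> K'" using subgroup.m_inv_closed[OF sY y(1)] YL LK by blast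
      hence "inv y \<otimes> k \<in> K'" by (rule subgroup.m_closed[OF sK _ k(1)])
      hence "inv y \<otimes> k \<in> {k \<in> K'. L' #> k \<in> U}" using Ob(2) y(2) by blast
      hence "L' #> (inv y \<otimes> k) \<in> U" by blast
      moreover have "L' #> (inv y \<otimes> k) = L' #> k"
      proof -
        have "inv y \<otimes> k \<otimes> inv k = inv y" using yc kc by (simp add: m_assoc)
        moreover have "inv y \<in> L'" using subgroup.m_inv_closed[OF sY y(1)] YL by blast
        ultimately show ?thesis using rcos_eq_iff[OF sL _ kc] yc kc by simp
      qed
      ultimately have "\<phi> c \<in> U" using phi_eq[OF kc] k(2) by simp
      thus "c \<in> {c \<in> topspace (subtopology Q S). \<phi> c \<in> U}" using tsub k by (auto simp: S_def)
    qed
    show "openin (subtopology Q S) {c \<in> topspace (subtopology Q S). \<phi> c \<in> U}"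
      unfolding eq2 openin_subtopology using Vopen by blast
  qed
  have "\<phi> ` S = topspace Q'"
  proof -
    have "\<phi> ` S = (\<lambda>k. L' #> k) ` K'" unfolding S_def image_image using phi_eq K'c
      by (intro image_cong) auto
    thus ?thesis using tQ' by simp
  qed
  hence "compactin Q' (topspace Q')" using image_compactin[OF cS2 cont] by simp
  thus ?thesis unfolding compact_factor_def Q'_def compact_space_def .
qed


lemma ser_mono:
  assumes ser: "ess_chief_series G T B n" and ab: "a \<le> b" and bn: "b \<le> n"
  shows "B a \<subseteq> B b"
  using ab bn
proof (induction b)
  case 0 thus ?case by simp
next
  case (Suc b)
  show ?case
  proof (cases "a = Suc b")
    case True thus ?thesis by simp
  next
    case False
    hence "a \<le> b" using Suc.prems by simp
    hence "B a \<subseteq> B b" using Suc.IH Suc.prems by simp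
    moreover have "B b \<subseteq> B (Suc b)" using ser Suc.prems unfolding ess_chief_series_def by simp
    ultimately show ?thesis by blast
  qed
qed

lemma neg_from:
  assumes ch: "chief_factor G T K L" and ch2: "chief_factor G T K' L'"
    and cd: "compact_factor G T K' L' \<or> discrete_factor G T K' L'"
    and as: "associated G T K L K' L'"
  shows "negligible G T K L"
  unfolding negligible_def using ch ch2 cd as by blast

lemma main_lem:
  assumes ser: "ess_chief_series G T B n" and ch: "chief_factor G T K L" and nn: "\<not> negligible G T K L"
  shows "\<exists>j\<in>{1..n}. chief_factor G T (B j) (B (j - 1)) \<and> \<not> negligible G T (B j) (B (j - 1)) \<and>
           associated G T K L (B j) (B (j - 1)) \<and>
           (\<forall>j'\<in>{1..n}. associated G T K L (B j') (B (j' - 1)) \<longrightarrow> j' = j)"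
proof -
  note K = chief_props(1)[OF ch] and L = chief_props(2)[OF ch]
  define C where "C = cent K L"
  have Kc: "K \<subseteq> carrier G" by (rule cn_carr[OF K])
  have Ccn: "closed_normal G T C" unfolding C_def by (rule cent_cn[OF cn_norm[OF K] L])
  have na: "\<not> K \<subseteq> C"
  proof
    assume "K \<subseteq> C"
    hence "abelian_factor G K L" using abel_iff[OF Kc] unfolding C_def by simp
    thus False using nn ch unfolding negligible_def by blast
  qed
  have B0: "B 0 = {\<one>}" and Bn: "B n = carrier G"
    and cnB: "\<And>i. i \<le> n \<Longrightarrow> closed_normal G T (B i)"
    and stp: "\<And>i. i < n \<Longrightarrow> B i \<subseteq> B (Suc i) \<and> (compact_factor G T (B (Suc i)) (B i) \<or>
        discrete_factor G T (B (Suc i)) (B i) \<or> chief_factor G T (B (Suc i)) (B i))"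
    using ser unfolding ess_chief_series_def by auto
  have exj: "\<not> B n \<subseteq> C" using na Kc Bn by blast
  define j where "j = (LEAST j. \<not> B j \<subseteq> C)"
  have Bj: "\<not> B j \<subseteq> C" unfolding j_def by (rule LeastI[of _ n]) (rule exj)
  have jn: "j \<le> n" unfolding j_def by (rule Least_le) (rule exj)
  have j0: "j \<noteq> 0"
  proof
    assume "j = 0"
    hence "B j = {\<one>}" using B0 by simp
    moreover have "\<one> \<in> C" by (rule subgroup.one_closed[OF cn_sub[OF Ccn]])
    ultimately show False using Bj by auto
  qed
  have Bj1: "B (j - 1) \<subseteq> C"
  proof -
    have "j - 1 < j" using j0 by simp
    hence "\<not> \<not> B (j - 1) \<subseteq> C" unfolding j_def by (rule not_less_Least)
    thus ?thesis by simp
  qed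
  have jS: "Suc (j - 1) = j" using j0 by simp
  have st: "B (j - 1) \<subseteq> B j \<and> (compact_factor G T (B j) (B (j - 1)) \<or>
        discrete_factor G T (B j) (B (j - 1)) \<or> chief_factor G T (B j) (B (j - 1)))"
    using stp[of "j - 1"] jS jn j0 by simp
  have P: "closed_normal G T (B j)" by (rule cnB[OF jn])
  have Y: "closed_normal G T (B (j - 1))" by (rule cnB) (use jn in simp)
  have chB: "chief_factor G T (B j) (B (j - 1))"
  proof -
    have cd: "compact_factor G T (B j) (B (j - 1)) \<or> discrete_factor G T (B j) (B (j - 1)) \<Longrightarrow> False"
    proof -
      assume cd: "compact_factor G T (B j) (B (j - 1)) \<or> discrete_factor G T (B j) (B (j - 1))"
      obtain K' L' where kl: "chief_factor G T K' L'" "B (j - 1) \<subseteq> L'" "K' \<subseteq> B j" "associated G T K L K' L'"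
        using construct[OF ch na[unfolded C_def] P Y _ Bj1[unfolded C_def] Bj[unfolded C_def]] st by blast
      note K' = chief_props(1)[OF kl(1)] and L' = chief_props(2)[OF kl(1)]
      have "compact_factor G T K' L' \<or> discrete_factor G T K' L'"
        using cd TC[OF K' L' P Y kl(2) chief_props(3)[OF kl(1)] kl(3)]
          TD[OF K' L' P Y kl(2) chief_props(3)[OF kl(1)] kl(3)] by blast
      hence "negligible G T K L" by (rule neg_from[OF ch kl(1) _ kl(4)])
      thus False using nn by blast
    qed
    show ?thesis using st cd by blast
  qed
  have YC: "B (j - 1) \<subseteq> cent K L" using Bj1 unfolding C_def .
  have PC: "\<not> B j \<subseteq> cent K L" using Bj unfolding C_def .
  have as: "associated G T K L (B j) (B (j - 1))" by (rule assoc_intro[OF ch na[unfolded C_def] chB YC PC])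
  have ce: "cent (B j) (B (j - 1)) = cent K L" "\<not> B j \<subseteq> cent (B j) (B (j - 1))"
    using cent_eq[OF ch na[unfolded C_def] chB as] by auto
  have nnB: "\<not> negligible G T (B j) (B (j - 1))"
  proof
    assume ng: "negligible G T (B j) (B (j - 1))"
    have "\<not> abelian_factor G (B j) (B (j - 1))" using ce(2) abel_iff[OF cn_carr[OF P]] by simp
    then obtain K'' L'' where kl: "chief_factor G T K'' L''"
      "compact_factor G T K'' L'' \<or> discrete_factor G T K'' L''" "associated G T (B j) (B (j - 1)) K'' L''"
      using ng unfolding negligible_def by blast
    have "L'' \<subseteq> cent (B j) (B (j - 1))" "\<not> K'' \<subseteq> cent (B j) (B (j - 1))"
      using assoc_imp[OF chB ce(2) chief_props(1)[OF kl(1)] chief_props(2)[OF kl(1)] chief_props(3)[OF kl(1)] kl(3)]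
      by auto
    hence "L'' \<subseteq> cent K L" "\<not> K'' \<subseteq> cent K L" using ce(1) by auto
    hence "associated G T K L K'' L''" by (intro assoc_intro[OF ch na[unfolded C_def] kl(1)])
    hence "negligible G T K L" by (rule neg_from[OF ch kl(1) kl(2)])
    thus False using nn by blast
  qed
  have uniq: "\<forall>j'\<in>{1..n}. associated G T K L (B j') (B (j' - 1)) \<longrightarrow> j' = j"
  proof (intro ballI impI)
    fix j' assume j': "j' \<in> {1..n}" and as': "associated G T K L (B j') (B (j' - 1))"
    have j'n: "j' \<le> n" using j' by simp
    have sub': "B (j' - 1) \<subseteq> B j'" by (rule ser_mono[OF ser _ j'n]) simp
    have r: "B (j' - 1) \<subseteq> cent K L" "\<not> B j' \<subseteq> cent K L"
      using assoc_imp[OF ch na[unfolded C_def] cnB[OF j'n] cnB[of "j' - 1"] sub' as'] j'n by auto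
    have "j \<le> j'" unfolding j_def by (rule Least_le) (use r(2) C_def in simp)
    moreover have "\<not> j < j'"
    proof
      assume "j < j'"
      hence "B j \<subseteq> B (j' - 1)" using ser_mono[OF ser _ ] j'n by simp
      thus False using r(1) PC by blast
    qed
    ultimately show "j' = j" by simp
  qed
  show ?thesis using chB nnB as uniq jn j0 by auto
qed

end

theorem mainTheorem13:
  fixes G :: "('a, 'b) monoid_scheme" and T :: "'a topology"
    and A B :: "nat \<Rightarrow> 'a set" and m n :: nat
  assumes "lcsc_group G T"
    and "ess_chief_series G T A m"
    and "ess_chief_series G T B n"
  defines "I \<equiv> {i \<in> {1..m}. chief_factor G T (A i) (A (i - 1)) \<and> \<not> negligible G T (A i) (A (i - 1))}"
    and "J \<equiv> {j \<in> {1..n}. chief_factor G T (B j) (B (j - 1)) \<and> \<not> negligible G T (B j) (B (j - 1))}"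
  shows "\<exists>f. bij_betw f I J \<and>
           (\<forall>i \<in> I. \<forall>j \<in> J. associated G T (A i) (A (i - 1)) (B j) (B (j - 1)) \<longleftrightarrow> j = f i)"
proof -
  interpret tgrp G T using assms(1) tgrpI unfolding lcsc_group_def by blast
  define f where "f = (\<lambda>i. THE j. j \<in> J \<and> associated G T (A i) (A (i - 1)) (B j) (B (j - 1)))"
  have F1: "f i \<in> J \<and> associated G T (A i) (A (i - 1)) (B (f i)) (B (f i - 1)) \<and>
      (\<forall>j\<in>J. associated G T (A i) (A (i - 1)) (B j) (B (j - 1)) \<longrightarrow> j = f i)" if i: "i \<in> I" for i
  proof -
    have ch: "chief_factor G T (A i) (A (i - 1))" and nn: "\<not> negligible G T (A i) (A (i - 1))"
      using i unfolding I_def by auto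
    obtain j where j: "j \<in> {1..n}" "chief_factor G T (B j) (B (j - 1))" "\<not> negligible G T (B j) (B (j - 1))"
      "associated G T (A i) (A (i - 1)) (B j) (B (j - 1))"
      "\<forall>j'\<in>{1..n}. associated G T (A i) (A (i - 1)) (B j') (B (j' - 1)) \<longrightarrow> j' = j"
      using main_lem[OF assms(3) ch nn] by blast
    have jJ: "j \<in> J" unfolding J_def using j by blast
    have fj: "f i = j" unfolding f_def
    proof (rule the_equality)
      show "j \<in> J \<and> associated G T (A i) (A (i - 1)) (B j) (B (j - 1))" using jJ j(4) by blast
      fix j' assume "j' \<in> J \<and> associated G T (A i) (A (i - 1)) (B j') (B (j' - 1))"
      thus "j' = j" using j(5) unfolding J_def by blast
    qed
    show ?thesis using fj jJ j(4) j(5) unfolding J_def by auto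
  qed
  have inj: "inj_on f I"
  proof (rule inj_onI)
    fix i i' assume i: "i \<in> I" and i': "i' \<in> I" and eq: "f i = f i'"
    define j where "j = f i"
    have jJ: "j \<in> J" using F1[OF i] unfolding j_def by blast
    have chB: "chief_factor G T (B j) (B (j - 1))" and nnB: "\<not> negligible G T (B j) (B (j - 1))"
      using jJ unfolding J_def by auto
    have chA: "chief_factor G T (A i) (A (i - 1))" using i unfolding I_def by auto
    have chA': "chief_factor G T (A i') (A (i' - 1))" using i' unfolding I_def by auto
    have a1: "associated G T (A i) (A (i - 1)) (B j) (B (j - 1))" using F1[OF i] unfolding j_def by blast
    have a2: "associated G T (A i') (A (i' - 1)) (B j) (B (j - 1))" using F1[OF i'] eq unfolding j_def by simp
    have b1: "associated G T (B j) (B (j - 1)) (A i) (A (i - 1))"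
      by (rule assoc_sym[OF chief_props(2)[OF chA] chief_props(2)[OF chB] a1])
    have b2: "associated G T (B j) (B (j - 1)) (A i') (A (i' - 1))"
      by (rule assoc_sym[OF chief_props(2)[OF chA'] chief_props(2)[OF chB] a2])
    obtain i0 where i0: "\<forall>j'\<in>{1..m}. associated G T (B j) (B (j - 1)) (A j') (A (j' - 1)) \<longrightarrow> j' = i0"
      using main_lem[OF assms(2) chB nnB] by blast
    have "i = i0" using i0 b1 i unfolding I_def by blast
    moreover have "i' = i0" using i0 b2 i' unfolding I_def by blast
    ultimately show "i = i'" by simp
  qed
  have img: "f ` I = J"
  proof (intro equalityI subsetI)
    fix y assume "y \<in> f ` I"
    thus "y \<in> J" using F1 by blast
  next
    fix j assume jJ: "j \<in> J"
    have chB: "chief_factor G T (B j) (B (j - 1))" and nnB: "\<not> negligible G T (B j) (B (j - 1))"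
      using jJ unfolding J_def by auto
    obtain i where i: "i \<in> {1..m}" "chief_factor G T (A i) (A (i - 1))" "\<not> negligible G T (A i) (A (i - 1))"
      "associated G T (B j) (B (j - 1)) (A i) (A (i - 1))"
      using main_lem[OF assms(2) chB nnB] by blast
    have iI: "i \<in> I" unfolding I_def using i by blast
    have "associated G T (A i) (A (i - 1)) (B j) (B (j - 1))"
      by (rule assoc_sym[OF chief_props(2)[OF chB] chief_props(2)[OF i(2)] i(4)])
    hence "j = f i" using F1[OF iI] jJ by blast
    thus "j \<in> f ` I" using iI by blast
  qed
  have "bij_betw f I J" unfolding bij_betw_def using inj img by blast
  moreover have "\<forall>i \<in> I. \<forall>j \<in> J. associated G T (A i) (A (i - 1)) (B j) (B (j - 1)) \<longleftrightarrow> j = f i"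
    using F1 by blast
  ultimately show ?thesis by blast
qed

end
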